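(* For every finitely generated group $G$ there is an exact sequence $1\to Z(RF(G))\to RF(G)\to RF_{na}(G)\to 1$, where the map $RF(G)\to RF_{na}(G)$ is the natural projection. In particular, $G$ is residually non-abelian free if and only if $G$ is residually free and $Z(G)=1$.
   Context: $\mathbb F$ denotes a non-abelian free group. $RF(G)$ is the quotient of $G$ by the intersection of the kernels of all homomorphisms $G\to\mathbb F$; $RF_{na}(G)$ is the quotient of $G$ by the intersection of the kernels of all homomorphisms $G\to\mathbb F$ with non-abelian image (so $RF_{na}(G)$ is a quotient of $RF(G)$). $G$ is residually free if $G=RF(G)$ (i.e. the natural map $G\to RF(G)$ is injective), and residually non-abelian free if $G=RF_{na}(G)$. $Z(H)$ is the center of $H$. *)

theory Defs
  imports "HOL-Algebra.Algebra"
begin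

fun word_eval :: "('a, 'm) monoid_scheme \<Rightarrow> ('a \<times> bool) list \<Rightarrow> 'a" where
  "word_eval F [] = \<one>\<^bsub>F\<^esub>"
| "word_eval F ((x, b) # w) = (if b then x else inv\<^bsub>F\<^esub> x) \<otimes>\<^bsub>F\<^esub> word_eval F w"

fun reduced_word :: "('a \<times> bool) list \<Rightarrow> bool" where
  "reduced_word [] = True"
| "reduced_word [_] = True"
| "reduced_word ((x, b) # (y, c) # w) = (\<not> (x = y \<and> b \<noteq> c) \<and> reduced_word ((y, c) # w))"

definition free_basis :: "('a, 'm) monoid_scheme \<Rightarrow> 'a set \<Rightarrow> bool" where
  "free_basis F B \<longleftrightarrow> group F \<and> B \<subseteq> carrier F \<and> generate F B = carrier F \<and>
     (\<forall>w. w \<noteq> [] \<and> reduced_word w \<and> set (map fst w) \<subseteq> B \<longrightarrow> word_eval F w \<noteq> \<one>\<^bsub>F\<^esub>)"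

definition nonabelian_free_group :: "('a, 'm) monoid_scheme \<Rightarrow> bool" where
  "nonabelian_free_group F \<longleftrightarrow> (\<exists>B. free_basis F B \<and> (\<exists>a\<in>B. \<exists>b\<in>B. a \<noteq> b))"

definition finitely_generated_group :: "('a, 'm) monoid_scheme \<Rightarrow> bool" where
  "finitely_generated_group G \<longleftrightarrow> group G \<and>
     (\<exists>S. finite S \<and> S \<subseteq> carrier G \<and> generate G S = carrier G)"

definition group_center :: "('a, 'm) monoid_scheme \<Rightarrow> 'a set" where
  "group_center G = {z \<in> carrier G. \<forall>x\<in>carrier G. x \<otimes>\<^bsub>G\<^esub> z = z \<otimes>\<^bsub>G\<^esub> x}"

definition nonabelian_set :: "('a, 'm) monoid_scheme \<Rightarrow> 'a set \<Rightarrow> bool" where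
  "nonabelian_set F S \<longleftrightarrow> (\<exists>x\<in>S. \<exists>y\<in>S. x \<otimes>\<^bsub>F\<^esub> y \<noteq> y \<otimes>\<^bsub>F\<^esub> x)"

definition RF_kernel :: "('a, 'm) monoid_scheme \<Rightarrow> ('b, 'n) monoid_scheme \<Rightarrow> 'a set" where
  "RF_kernel G F = {g \<in> carrier G. \<forall>h\<in>hom G F. h g = \<one>\<^bsub>F\<^esub>}"

definition RFna_kernel :: "('a, 'm) monoid_scheme \<Rightarrow> ('b, 'n) monoid_scheme \<Rightarrow> 'a set" where
  "RFna_kernel G F = {g \<in> carrier G. \<forall>h\<in>hom G F.
      nonabelian_set F (h ` carrier G) \<longrightarrow> h g = \<one>\<^bsub>F\<^esub>}"

definition RF :: "('a, 'm) monoid_scheme \<Rightarrow> ('b, 'n) monoid_scheme \<Rightarrow> 'a set monoid" where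
  "RF G F = G Mod (RF_kernel G F)"

definition RFna :: "('a, 'm) monoid_scheme \<Rightarrow> ('b, 'n) monoid_scheme \<Rightarrow> 'a set monoid" where
  "RFna G F = G Mod (RFna_kernel G F)"

text \<open>The natural projection RF(G) \<rightarrow> RF_na(G), sending the coset K #> g to K_na #> g.\<close>
definition RF_proj :: "('a, 'm) monoid_scheme \<Rightarrow> ('b, 'n) monoid_scheme \<Rightarrow> 'a set \<Rightarrow> 'a set" where
  "RF_proj G F C = (\<Union>g\<in>C. RFna_kernel G F #>\<^bsub>G\<^esub> g)"

definition residually_free :: "('a, 'm) monoid_scheme \<Rightarrow> ('b, 'n) monoid_scheme \<Rightarrow> bool" where
  "residually_free G F \<longleftrightarrow> RF_kernel G F = {\<one>\<^bsub>G\<^esub>}"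

definition residually_na_free :: "('a, 'm) monoid_scheme \<Rightarrow> ('b, 'n) monoid_scheme \<Rightarrow> bool" where
  "residually_na_free G F \<longleftrightarrow> RFna_kernel G F = {\<one>\<^bsub>G\<^esub>}"

end

theory Submission
  imports Defs
begin



definition invl :: "'a \<times> bool \<Rightarrow> 'a \<times> bool" where "invl l = (fst l, \<not> snd l)"

lemma invl_invl[simp]: "invl (invl l) = l" by (cases l) (simp add: invl_def)
lemma invl_neq[simp]: "invl l \<noteq> l" "l \<noteq> invl l" by (cases l, simp add: invl_def)+
lemma fst_invl[simp]: "fst (invl l) = fst l" by (simp add: invl_def)

fun rcons :: "'a \<times> bool \<Rightarrow> ('a \<times> bool) list \<Rightarrow> ('a \<times> bool) list" where
  "rcons l [] = [l]"
| "rcons l (m # w) = (if m = invl l then w else l # m # w)"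

fun red :: "('a \<times> bool) list \<Rightarrow> ('a \<times> bool) list" where
  "red [] = []"
| "red (l # w) = rcons l (red w)"

definition invw :: "('a \<times> bool) list \<Rightarrow> ('a \<times> bool) list" where
  "invw w = rev (map invl w)"

lemma invw_simps[simp]: "invw [] = []" "invw (l # w) = invw w @ [invl l]"
  "invw (u @ v) = invw v @ invw u" "invw (invw w) = w" "length (invw w) = length w"
  by (auto simp: invw_def rev_map[symmetric] comp_def)

lemma reduced_Cons: "reduced_word (l # w) \<longleftrightarrow> reduced_word w \<and> (w = [] \<or> hd w \<noteq> invl l)"
  by (cases l; cases w) (auto simp: invl_def)

lemma rcons_nohd: "w = [] \<or> hd w \<noteq> invl l \<Longrightarrow> rcons l w = l # w"
  by (cases w) auto

lemma reduced_rcons: "reduced_word w \<Longrightarrow> reduced_word (rcons l w)"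
  by (cases w) (auto simp: reduced_Cons)

lemma reduced_red: "reduced_word (red w)"
  by (induction w) (auto simp: reduced_rcons)

lemma red_reduced: "reduced_word w \<Longrightarrow> red w = w"
  by (induction w) (auto simp: reduced_Cons rcons_nohd)

lemma rcons_cancel: "reduced_word w \<Longrightarrow> rcons l (rcons (invl l) w) = w"
  by (cases w) (auto simp: reduced_Cons rcons_nohd)

lemma red_append: "red (u @ v) = foldr rcons u (red v)"
  by (induction u) auto

lemma foldr_red: "reduced_word w \<Longrightarrow> foldr rcons u w = foldr rcons (red u) w"
proof (induction u)
  case Nil then show ?case by simp
next
  case (Cons l u)
  have r: "reduced_word (foldr rcons r w)" for r
    using Cons.prems by (induction r) (auto simp: reduced_rcons)
  have IH: "foldr rcons (l # u) w = rcons l (foldr rcons (red u) w)" using Cons by simp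
  show ?case
  proof (cases "red u")
    case Nil then show ?thesis using IH by simp
  next
    case (Cons m r)
    show ?thesis
    proof (cases "m = invl l")
      case True
      have "rcons l (rcons (invl l) (foldr rcons r w)) = foldr rcons r w" using rcons_cancel[OF r[of r]] .
      then show ?thesis using IH Cons True by simp
    next
      case False
      then show ?thesis using IH Cons by simp
    qed
  qed
qed

lemma red_append_left: "red (u @ v) = red (red u @ v)"
  unfolding red_append by (rule foldr_red[OF reduced_red])

lemma red_append_right: "red (u @ v) = red (u @ red v)"
  by (simp add: red_append red_reduced[OF reduced_red])

lemma red_invw_cancel: "red (invw v @ v) = []"
proof (induction v)
  case Nil then show ?case by simp
next
  case (Cons l v)
  have "red (invw (l # v) @ l # v) = foldr rcons (invw v) (rcons (invl l) (rcons l (red v)))"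
    by (simp add: red_append)
  also have "\<dots> = foldr rcons (invw v) (red v)"
    using rcons_cancel[OF reduced_red, of "invl l" v] by simp
  also have "\<dots> = []" using Cons by (simp add: red_append)
  finally show ?case .
qed

lemma red_cancel_eq:
  assumes "reduced_word u" "reduced_word v" "red (u @ invw v) = []"
  shows "u = v"
proof -
  have "u = red (u @ red (invw v @ v))" by (simp add: red_invw_cancel red_reduced assms)
  also have "\<dots> = red ((u @ invw v) @ v)" by (simp flip: red_append_right)
  also have "\<dots> = red (red (u @ invw v) @ v)" by (rule red_append_left)
  also have "\<dots> = v" using assms by (simp add: red_reduced)
  finally show ?thesis .
qed

lemma length_rcons: "length (rcons l w) \<le> Suc (length w)"
  by (cases w) auto

lemma length_red: "length (red w) \<le> length w"
  by (induction w) (auto intro: le_trans[OF length_rcons])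

lemma length_red_eq: "length (red w) = length w \<Longrightarrow> red w = w"
proof (induction w)
  case Nil then show ?case by simp
next
  case (Cons l w)
  have a: "length (red w) = length w"
    using Cons.prems length_rcons[of l "red w"] length_red[of w] by simp
  then have "red w = w" using Cons.IH by simp
  moreover have "length (rcons l w) = Suc (length w) \<Longrightarrow> rcons l w = l # w"
    by (cases w) (auto split: if_splits)
  ultimately have "rcons l w = l # w" using Cons.prems by simp
  then show ?case using \<open>red w = w\<close> by (simp only: red.simps)
qed

lemma letters_rcons: "set (map fst (rcons l w)) \<subseteq> insert (fst l) (set (map fst w))"
  by (cases w) auto

lemma letters_red: "set (map fst (red w)) \<subseteq> set (map fst w)"
proof (induction w)
  case (Cons l w)
  have "set (map fst (red (l#w))) \<subseteq> insert (fst l) (set (map fst (red w)))"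
    using letters_rcons[of l "red w"] by (simp only: red.simps)
  then show ?case using Cons.IH by auto
qed simp

lemma reduced_snoc: "reduced_word (w @ [l]) \<longleftrightarrow> reduced_word w \<and> (w = [] \<or> last w \<noteq> invl l)"
proof (induction w)
  case Nil then show ?case by simp
next
  case (Cons m w)
  show ?case
  proof (cases w)
    case Nil then show ?thesis by (auto simp: reduced_Cons)
  next
    case (Cons a v)
    have e1: "(m#w)@[l] = m # ((a#v)@[l])" using Cons by simp
    have "reduced_word ((m#w)@[l]) \<longleftrightarrow> reduced_word ((a#v)@[l]) \<and> a \<noteq> invl m"
      unfolding e1 reduced_Cons[of m "(a#v)@[l]"] by simp
    also have "\<dots> \<longleftrightarrow> (reduced_word (a#v) \<and> last (a#v) \<noteq> invl l) \<and> a \<noteq> invl m"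
      using Cons.IH Cons by simp
    also have "\<dots> \<longleftrightarrow> reduced_word (m#w) \<and> last (m#w) \<noteq> invl l"
      unfolding Cons reduced_Cons[of m "a#v"] by auto
    finally show ?thesis by simp
  qed
qed

lemma hd_invw: "w \<noteq> [] \<Longrightarrow> hd (invw w) = invl (last w)"
  by (simp add: invw_def hd_rev last_map)

lemma last_invw: "w \<noteq> [] \<Longrightarrow> last (invw w) = invl (hd w)"
  by (simp add: invw_def last_rev hd_map)

lemma invw_Nil_iff[simp]: "invw w = [] \<longleftrightarrow> w = []"
  by (simp add: invw_def)

lemma reduced_invw: "reduced_word w \<Longrightarrow> reduced_word (invw w)"
proof (induction w rule: rev_induct)
  case Nil then show ?case by simp
next
  case (snoc l w)
  have "reduced_word w" "w = [] \<or> last w \<noteq> invl l" using snoc.prems reduced_snoc by blast+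
  moreover have "w \<noteq> [] \<Longrightarrow> last w \<noteq> invl l \<Longrightarrow> hd (invw w) \<noteq> invl (invl l)"
    using hd_invw[of w] by (metis invl_invl)
  ultimately have A: "reduced_word (invw w)" and B: "invw w = [] \<or> hd (invw w) \<noteq> invl (invl l)"
    using snoc.IH invw_Nil_iff by blast+
  have "reduced_word (invl l # invw w)" using reduced_Cons[of "invl l" "invw w"] A B by blast
  moreover have E: "invw (w@[l]) = invl l # invw w" by simp
  ultimately show ?case by (simp only: E)
qed




definition pw :: "'x list \<Rightarrow> nat \<Rightarrow> 'x list" where "pw t n = concat (replicate n t)"

lemma pw_0[simp]: "pw t 0 = []" by (simp add: pw_def)
lemma pw_Suc: "pw t (Suc n) = t @ pw t n" by (simp add: pw_def)
lemma pw_add: "pw t (a + b) = pw t a @ pw t b" by (simp add: pw_def replicate_add)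
lemma pw_comm: "pw t a @ pw t b = pw t b @ pw t a" by (metis pw_add add.commute)
lemma pw_1[simp]: "pw t (Suc 0) = t" by (simp add: pw_def)
lemma pw_snoc: "pw t n @ t = t @ pw t n" using pw_comm[of t n 1] by simp

lemma comm_root: "x @ c = c @ x \<Longrightarrow> \<exists>t a b. x = pw t a \<and> c = pw t b"
proof (induction "length x + length c" arbitrary: x c rule: less_induct)
  case less
  show ?case
  proof (cases "x = [] \<or> c = []")
    case True
    then show ?thesis
    proof
      assume "x = []" then have "x = pw c 0 \<and> c = pw c 1" by simp
      then show ?thesis by blast
    next
      assume "c = []" then have "x = pw x 1 \<and> c = pw x 0" by simp
      then show ?thesis by blast
    qed
  next
    case False
    show ?thesis
    proof (cases "length x \<le> length c")
      case True
      have "take (length x) (x @ c) = take (length x) (c @ x)" using less.prems by simp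
      then have tx: "take (length x) c = x" using True by simp
      define w where "w = drop (length x) c"
      have cw: "c = x @ w" unfolding w_def using tx by (metis append_take_drop_id)
      have "x @ w = w @ x" using less.prems unfolding cw by simp
      moreover have "length x + length w < length x + length c" using cw False by auto
      ultimately obtain t a b where "x = pw t a" "w = pw t b" using less.hyps by blast
      then show ?thesis using cw by (intro exI[of _ t] exI[of _ a] exI[of _ "a+b"]) (simp add: pw_add)
    next
      case False2: False
      have "take (length c) (x @ c) = take (length c) (c @ x)" using less.prems by simp
      then have tx: "take (length c) x = c" using False2 by simp
      define w where "w = drop (length c) x"
      have cw: "x = c @ w" unfolding w_def using tx by (metis append_take_drop_id)
      have "w @ c = c @ w" using less.prems unfolding cw by simp
      moreover have "length w + length c < length x + length c" using cw False by auto
      ultimately obtain t a b where "w = pw t a" "c = pw t b" using less.hyps by blast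
      then show ?thesis using cw by (intro exI[of _ t] exI[of _ "b+a"] exI[of _ b]) (simp add: pw_add)
    qed
  qed
qed

lemma pw_shift: "pw (a @ b) n @ a = a @ pw (b @ a) n"
  by (induction n) (simp_all add: pw_Suc)

lemma pow_comm: "u @ pw v n = pw v n @ u \<Longrightarrow> n \<ge> 1 \<Longrightarrow> u @ v = v @ u"
proof (induction "length u" arbitrary: u rule: less_induct)
  case less
  obtain m where n: "n = Suc m" using less.prems(2) by (cases n) auto
  show ?case
  proof (cases "v = []")
    case True then show ?thesis by simp
  next
    case vne: False
    show ?thesis
    proof (cases "length v \<le> length u")
      case True
      have "take (length v) (u @ pw v n) = take (length v) (pw v n @ u)" using less.prems by simp
      then have "take (length v) u = v" using True by (simp add: n pw_Suc)
      then obtain u' where uu: "u = v @ u'" by (metis append_take_drop_id)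
      have "v @ (u' @ pw v n) = v @ (pw v n @ u')"
        using less.prems(1) pw_snoc[of v n] unfolding uu by simp
      then have "u' @ pw v n = pw v n @ u'" by simp
      then have "u' @ v = v @ u'" using less.hyps[of u'] less.prems uu vne by simp
      then show ?thesis unfolding uu by (metis append_assoc)
    next
      case False
      have "take (length u) (u @ pw v n) = take (length u) (pw v n @ u)" using less.prems by simp
      then have "take (length u) v = u" using False by (simp add: n pw_Suc)
      then obtain v' where vv: "v = u @ v'" by (metis append_take_drop_id)
      have "u @ pw (u @ v') n = u @ pw (v' @ u) n"
        using less.prems(1) pw_shift[of u v' n] unfolding vv by simp
      then have "pw (u @ v') n = pw (v' @ u) n" by simp
      then have "take (length (u @ v')) (pw (u @ v') n) = take (length (v' @ u)) (pw (v' @ u) n)"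
        by (simp add: add.commute)
      then have "u @ v' = v' @ u" by (simp add: n pw_Suc)
      then show ?thesis unfolding vv by (metis append_assoc)
    qed
  qed
qed

lemma comm_pw: "y @ t = t @ y \<Longrightarrow> y @ pw t a = pw t a @ y"
  by (induction a) (simp_all add: pw_Suc, metis append_assoc)

lemma comm_trans_monoid:
  assumes "c \<noteq> []" "x @ c = c @ x" "y @ c = c @ y"
  shows "x @ y = y @ x"
proof -
  obtain t a b where xt: "x = pw t a" and ct: "c = pw t b" using comm_root[OF assms(2)] by blast
  have "b \<ge> 1" using assms(1) ct by (cases b) auto
  then have "y @ t = t @ y" using pow_comm[of y t b] assms(3) ct by simp
  then show ?thesis using comm_pw xt by metis
qed

lemma reduced_append:
  "reduced_word u \<Longrightarrow> reduced_word v \<Longrightarrow> (u = [] \<or> v = [] \<or> hd v \<noteq> invl (last u)) \<Longrightarrow> reduced_word (u @ v)"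
proof (induction u)
  case Nil then show ?case by simp
next
  case (Cons a u)
  have ru: "reduced_word u" and h: "u = [] \<or> hd u \<noteq> invl a" using Cons.prems(1) reduced_Cons by blast+
  show ?case
  proof (cases "u = []")
    case True
    then show ?thesis using Cons.prems reduced_Cons[of a v] by auto
  next
    case False
    have "reduced_word (u @ v)" using Cons.IH ru Cons.prems False by auto
    moreover have "hd (u @ v) \<noteq> invl a" using h False by simp
    ultimately show ?thesis using reduced_Cons[of a "u @ v"] by simp
  qed
qed

lemma reduced_red_iff: "reduced_word w \<longleftrightarrow> red w = w"
  by (metis red_reduced reduced_red)

lemma comm_noncancel:
  assumes "reduced_word (p @ q)" "red (p @ q) = red (q @ p)"
  shows "p @ q = q @ p"
proof -
  have "red (p @ q) = p @ q" using assms(1) red_reduced by blast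
  then have "length (red (q @ p)) = length (q @ p)" using assms(2) by simp
  then have "red (q @ p) = q @ p" using length_red_eq by blast
  then show ?thesis using assms \<open>red (p @ q) = p @ q\<close> by simp
qed

lemma claimG:
  assumes rX: "reduced_word p" and rC: "reduced_word q" and cne: "q \<noteq> []"
    and cyc: "hd q \<noteq> invl (last q)"
    and e1: "red (p @ q) = red (q @ p)" and e2: "red (invw p @ q) = red (q @ invw p)"
  shows "p @ q = q @ p \<or> invw p @ q = q @ invw p"
proof (cases "reduced_word (p @ q)")
  case True then show ?thesis using comm_noncancel e1 by blast
next
  case False
  then have xne: "p \<noteq> []" using rX rC reduced_append by blast
  have "red (p @ q) \<noteq> p @ q" using False reduced_red by metis
  then have "length (red (p @ q)) < length (p @ q)" using length_red[of "p @ q"] length_red_eq[of "p @ q"] by (metis nat_less_le)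
  then have "length (red (q @ p)) < length (q @ p)" using e1 by simp
  then have "\<not> reduced_word (q @ p)" using red_reduced by fastforce
  then have h1: "hd p = invl (last q)" using rX rC reduced_append by blast
  have "reduced_word (invw p @ q)"
  proof (rule reduced_append[OF reduced_invw[OF rX] rC])
    have "hd q \<noteq> hd p" using cyc h1 by simp
    then show "invw p = [] \<or> q = [] \<or> hd q \<noteq> invl (last (invw p))"
      using last_invw[OF xne] by simp
  qed
  then show ?thesis using comm_noncancel e2 by blast
qed




lemma letters_invw'[simp]: "fst ` set (invw w) = fst ` set w"
  by (auto simp: invw_def image_image)
lemma letters_invw[simp]: "set (map fst (invw w)) = set (map fst w)"
  by simp

context group
begin

lemma eval_closed: "set (map fst w) \<subseteq> carrier G \<Longrightarrow> word_eval G w \<in> carrier G"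
proof (induction w)
  case (Cons l w) then show ?case by (cases l) auto
qed simp

lemma eval_append: "set (map fst u) \<subseteq> carrier G \<Longrightarrow> set (map fst v) \<subseteq> carrier G \<Longrightarrow>
    word_eval G (u @ v) = word_eval G u \<otimes> word_eval G v"
proof (induction u)
  case (Cons l u) then show ?case by (cases l) (auto simp: m_assoc eval_closed)
qed (simp add: eval_closed)

lemma eval_rcons: "fst l \<in> carrier G \<Longrightarrow> set (map fst w) \<subseteq> carrier G \<Longrightarrow>
    word_eval G (rcons l w) = word_eval G (l # w)"
proof (cases w)
  case (Cons m w')
  assume a: "fst l \<in> carrier G" "set (map fst w) \<subseteq> carrier G"
  obtain x b where l: "l = (x, b)" by (cases l)
  have c: "word_eval G w' \<in> carrier G" using a Cons by (simp add: eval_closed)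
  show ?thesis
  proof (cases "m = invl l")
    case True
    then have "m = (x, \<not> b)" using l by (simp add: invl_def)
    then show ?thesis using Cons a c l True
      by (auto simp: m_assoc[symmetric])
  qed (use Cons in simp)
qed simp

lemma eval_red: "set (map fst w) \<subseteq> carrier G \<Longrightarrow> word_eval G (red w) = word_eval G w"
proof (induction w)
  case (Cons l w)
  have "set (map fst (red w)) \<subseteq> carrier G" using letters_red[of w] Cons.prems by auto
  then show ?case using Cons by (cases l) (simp add: eval_rcons)
qed simp

lemma eval_invw: "set (map fst w) \<subseteq> carrier G \<Longrightarrow> word_eval G (invw w) = inv (word_eval G w)"
proof (induction w)
  case (Cons l w)
  obtain x b where l: "l = (x, b)" by (cases l)
  have c: "word_eval G w \<in> carrier G" "x \<in> carrier G" using Cons.prems l by (auto simp: eval_closed)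
  have li: "set (map fst (invw w)) \<subseteq> carrier G" using Cons.prems by (auto simp: invw_def)
  have "word_eval G (invw (l # w)) = word_eval G (invw w) \<otimes> word_eval G [invl l]"
    using li Cons.prems by (simp add: eval_append)
  also have "\<dots> = inv (word_eval G w) \<otimes> inv (if b then x else inv x)"
    using Cons c l by (auto simp: invl_def)
  also have "\<dots> = inv ((if b then x else inv x) \<otimes> word_eval G w)"
    using c by (simp add: inv_mult_group)
  finally show ?case using l by simp
qed simp

lemma generate_words: assumes S: "S \<subseteq> carrier G" and g: "g \<in> generate G S"
  shows "\<exists>w. set (map fst w) \<subseteq> S \<and> word_eval G w = g"
  using g
proof (induction rule: generate.induct)
  case one then show ?case by (intro exI[of _ "[]"]) simp
next
  case (incl h) then show ?case using S by (intro exI[of _ "[(h, True)]"]) auto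
next
  case (inv h) then show ?case using S by (intro exI[of _ "[(h, False)]"]) auto
next
  case (eng h1 h2)
  then obtain w1 w2 where "set (map fst w1) \<subseteq> S" "word_eval G w1 = h1"
    "set (map fst w2) \<subseteq> S" "word_eval G w2 = h2" by blast
  moreover have "word_eval G (w1 @ w2) = h1 \<otimes> h2"
    using calculation eval_append[of w1 w2] S by auto
  ultimately show ?case by (intro exI[of _ "w1 @ w2"]) simp
qed

end

lemma free_basis_nf_unique:
  assumes fb: "free_basis F B" and u: "set (map fst u) \<subseteq> B" "reduced_word u"
    and v: "set (map fst v) \<subseteq> B" "reduced_word v" and e: "word_eval F u = word_eval F v"
  shows "u = v"
proof -
  have gF: "group F" and BF: "B \<subseteq> carrier F" using fb by (auto simp: free_basis_def)
  interpret group F by (rule gF)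
  let ?w = "red (u @ invw v)"
  have lw: "set (map fst ?w) \<subseteq> B" using letters_red[of "u @ invw v"] u v
    by (simp only: map_append set_append letters_invw) blast
  have cu: "set (map fst u) \<subseteq> carrier F" and cv: "set (map fst v) \<subseteq> carrier F"
    using u v BF by auto
  then have civ: "set (map fst (invw v)) \<subseteq> carrier F" by simp
  have "word_eval F ?w = word_eval F (u @ invw v)"
    using cu civ by (intro eval_red) simp
  also have "\<dots> = word_eval F u \<otimes>\<^bsub>F\<^esub> inv\<^bsub>F\<^esub> (word_eval F v)"
    using cu cv civ by (simp add: eval_append eval_invw)
  also have "\<dots> = \<one>\<^bsub>F\<^esub>" using e v BF eval_closed[of v] by auto
  finally have "?w = []" using fb lw reduced_red unfolding free_basis_def by blast
  then show ?thesis using red_cancel_eq u v by blast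
qed

lemma free_basis_nf_exists:
  assumes fb: "free_basis F B" and g: "g \<in> carrier F"
  shows "\<exists>w. set (map fst w) \<subseteq> B \<and> reduced_word w \<and> word_eval F w = g"
proof -
  have gF: "group F" and BF: "B \<subseteq> carrier F" and gen: "generate F B = carrier F"
    using fb by (auto simp: free_basis_def)
  interpret group F by (rule gF)
  obtain w where w: "set (map fst w) \<subseteq> B" "word_eval F w = g"
    using generate_words[of B g] g gen BF by auto
  show ?thesis
    using w letters_red[of w] reduced_red[of w] eval_red[of w] BF
    by (intro exI[of _ "red w"]) auto
qed




lemma cyc_decomp: "reduced_word w \<Longrightarrow> w \<noteq> [] \<Longrightarrow>
  \<exists>u c. w = u @ c @ invw u \<and> c \<noteq> [] \<and> hd c \<noteq> invl (last c) \<and> reduced_word c"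
proof (induction "length w" arbitrary: w rule: less_induct)
  case less
  show ?case
  proof (cases "hd w \<noteq> invl (last w)")
    case True
    then show ?thesis using less.prems by (intro exI[of _ "[]"] exI[of _ w]) simp
  next
    case False
    obtain l w1 where w: "w = l # w1" using less.prems by (cases w) auto
    have "w1 \<noteq> []" using False w by auto
    then obtain m l' where w1: "w1 = m @ [l']" by (metis rev_exhaust)
    have ll: "l = invl l'" using False w w1 by simp
    have r1: "reduced_word w1" using less.prems(1) w reduced_Cons by blast
    then have rm: "reduced_word m" using w1 reduced_snoc by blast
    have mne: "m \<noteq> []"
    proof
      assume "m = []"
      then have "reduced_word [l, l']" using less.prems(1) w w1 by simp
      then show False using ll reduced_Cons[of l "[l']"] by simp
    qed
    have "length m < length w" using w w1 by simp
    then obtain u c where m: "m = u @ c @ invw u" "c \<noteq> []" "hd c \<noteq> invl (last c)" "reduced_word c"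
      using less.hyps rm mne by blast
    have "w = (l # u) @ c @ invw (l # u)" using w w1 m(1) ll by simp
    then show ?thesis using m by blast
  qed
qed

context group
begin

lemma rinv_assoc: "g \<in> carrier G \<Longrightarrow> XX \<in> carrier G \<Longrightarrow> g \<otimes> (inv g \<otimes> XX) = XX"
  by (simp add: m_assoc[symmetric])
lemma linv_assoc: "g \<in> carrier G \<Longrightarrow> XX \<in> carrier G \<Longrightarrow> inv g \<otimes> (g \<otimes> XX) = XX"
  by (simp add: m_assoc[symmetric])

lemma conj_mult: "a \<in> carrier G \<Longrightarrow> b \<in> carrier G \<Longrightarrow> g \<in> carrier G \<Longrightarrow>
   (inv g \<otimes> a \<otimes> g) \<otimes> (inv g \<otimes> b \<otimes> g) = inv g \<otimes> (a \<otimes> b) \<otimes> g"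
  by (simp add: m_assoc rinv_assoc)

lemma conj_comm_iff: "a \<in> carrier G \<Longrightarrow> b \<in> carrier G \<Longrightarrow> g \<in> carrier G \<Longrightarrow>
   (inv g \<otimes> a \<otimes> g) \<otimes> (inv g \<otimes> b \<otimes> g) = (inv g \<otimes> b \<otimes> g) \<otimes> (inv g \<otimes> a \<otimes> g) \<longleftrightarrow> a \<otimes> b = b \<otimes> a"
  by (simp add: conj_mult)

lemma inv_comm_iff: "a \<in> carrier G \<Longrightarrow> b \<in> carrier G \<Longrightarrow>
   inv a \<otimes> b = b \<otimes> inv a \<longleftrightarrow> a \<otimes> b = b \<otimes> a"
  by (metis inv_closed inv_solve_left inv_solve_right m_assoc m_closed)

end

lemma comm_via_word:
  assumes fb: "free_basis F B" and x: "x \<in> carrier F" and C: "set (map fst c) \<subseteq> B" "reduced_word c"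
    "c \<noteq> []" "hd c \<noteq> invl (last c)"
    and cm: "x \<otimes>\<^bsub>F\<^esub> word_eval F c = word_eval F c \<otimes>\<^bsub>F\<^esub> x"
  shows "\<exists>XX. set (map fst XX) \<subseteq> B \<and> XX @ c = c @ XX \<and> (word_eval F XX = x \<or> word_eval F XX = inv\<^bsub>F\<^esub> x)"
proof -
  have gF: "group F" and BF: "B \<subseteq> carrier F" using fb by (auto simp: free_basis_def)
  interpret group F by (rule gF)
  obtain XX where XX: "set (map fst XX) \<subseteq> B" "reduced_word XX" "word_eval F XX = x"
    using free_basis_nf_exists[OF fb x] by blast
  have cX: "set (map fst XX) \<subseteq> carrier F" and cc: "set (map fst c) \<subseteq> carrier F"
    using XX C BF by auto
  have ce: "word_eval F c \<in> carrier F" using cc eval_closed by blast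
  have e: "word_eval F (red (XX @ c)) = word_eval F (red (c @ XX))"
    using cX cc cm XX by (simp add: eval_red eval_append)
  have lr: "set (map fst (red w)) \<subseteq> B" if "set (map fst w) \<subseteq> B" for w
    using letters_red[of w] that by blast
  have l1: "set (map fst (red (XX @ c))) \<subseteq> B" "set (map fst (red (c @ XX))) \<subseteq> B"
    using lr[of "XX @ c"] lr[of "c @ XX"] XX(1) C(1) by simp_all
  have e1: "red (XX @ c) = red (c @ XX)"
    using free_basis_nf_unique[OF fb l1(1) reduced_red l1(2) reduced_red e] .
  have cm2: "inv\<^bsub>F\<^esub> x \<otimes>\<^bsub>F\<^esub> word_eval F c = word_eval F c \<otimes>\<^bsub>F\<^esub> inv\<^bsub>F\<^esub> x"
    using inv_comm_iff[OF x ce] cm by simp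
  have e': "word_eval F (red (invw XX @ c)) = word_eval F (red (c @ invw XX))"
    using cX cc cm2 XX by (simp add: eval_red eval_append eval_invw)
  have l2: "set (map fst (red (invw XX @ c))) \<subseteq> B" "set (map fst (red (c @ invw XX))) \<subseteq> B"
    using lr[of "invw XX @ c"] lr[of "c @ invw XX"] XX(1) C(1) by simp_all
  have e2: "red (invw XX @ c) = red (c @ invw XX)"
    using free_basis_nf_unique[OF fb l2(1) reduced_red l2(2) reduced_red e'] .
  have "XX @ c = c @ XX \<or> invw XX @ c = c @ invw XX"
    using claimG[OF XX(2) C(2) C(3) C(4) e1 e2] .
  then show ?thesis
  proof
    assume "XX @ c = c @ XX" then show ?thesis using XX by blast
  next
    assume "invw XX @ c = c @ invw XX" then show ?thesis using XX cX
      by (intro exI[of _ "invw XX"]) (simp add: eval_invw)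
  qed
qed

theorem free_comm_trans:
  assumes fb: "free_basis F B" and x: "x \<in> carrier F" and y: "y \<in> carrier F" and z: "z \<in> carrier F"
    and z1: "z \<noteq> \<one>\<^bsub>F\<^esub>" and xz: "x \<otimes>\<^bsub>F\<^esub> z = z \<otimes>\<^bsub>F\<^esub> x" and yz: "y \<otimes>\<^bsub>F\<^esub> z = z \<otimes>\<^bsub>F\<^esub> y"
  shows "x \<otimes>\<^bsub>F\<^esub> y = y \<otimes>\<^bsub>F\<^esub> x"
proof -
  have gF: "group F" and BF: "B \<subseteq> carrier F" using fb by (auto simp: free_basis_def)
  interpret group F by (rule gF)
  obtain W where W: "set (map fst W) \<subseteq> B" "reduced_word W" "word_eval F W = z"
    using free_basis_nf_exists[OF fb z] by blast
  have "W \<noteq> []" using W z1 by auto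
  then obtain u c where uc: "W = u @ c @ invw u" "c \<noteq> []" "hd c \<noteq> invl (last c)" "reduced_word c"
    using cyc_decomp W(2) by blast
  have uB: "set (map fst u) \<subseteq> B" and cB: "set (map fst c) \<subseteq> B" using W(1) uc(1) by auto
  have uC: "set (map fst u) \<subseteq> carrier F" and cC: "set (map fst c) \<subseteq> carrier F" using uB cB BF by auto
  define g where "g = word_eval F u"
  define cz where "cz = word_eval F c"
  have g: "g \<in> carrier F" and czc: "cz \<in> carrier F" using uC cC eval_closed g_def cz_def by auto
  have zz: "z = g \<otimes>\<^bsub>F\<^esub> cz \<otimes>\<^bsub>F\<^esub> inv\<^bsub>F\<^esub> g"
    using W(3) uc(1) uC cC by (simp add: eval_append eval_invw g_def cz_def m_assoc eval_closed)
  have czz: "cz = inv\<^bsub>F\<^esub> g \<otimes>\<^bsub>F\<^esub> z \<otimes>\<^bsub>F\<^esub> g"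
    using zz g czc by (simp add: m_assoc linv_assoc)
  define x1 where "x1 = inv\<^bsub>F\<^esub> g \<otimes>\<^bsub>F\<^esub> x \<otimes>\<^bsub>F\<^esub> g"
  define y1 where "y1 = inv\<^bsub>F\<^esub> g \<otimes>\<^bsub>F\<^esub> y \<otimes>\<^bsub>F\<^esub> g"
  have x1: "x1 \<in> carrier F" and y1: "y1 \<in> carrier F" using x y g x1_def y1_def by auto
  have "x1 \<otimes>\<^bsub>F\<^esub> word_eval F c = word_eval F c \<otimes>\<^bsub>F\<^esub> x1"
    using conj_comm_iff[OF x z g] xz unfolding x1_def czz[unfolded cz_def] by simp
  then obtain XX where XX: "set (map fst XX) \<subseteq> B" "XX @ c = c @ XX"
      "word_eval F XX = x1 \<or> word_eval F XX = inv\<^bsub>F\<^esub> x1"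
    using comm_via_word[OF fb x1 cB uc(4) uc(2) uc(3)] by blast
  have "y1 \<otimes>\<^bsub>F\<^esub> word_eval F c = word_eval F c \<otimes>\<^bsub>F\<^esub> y1"
    using conj_comm_iff[OF y z g] yz unfolding y1_def czz[unfolded cz_def] by simp
  then obtain YY where YY: "set (map fst YY) \<subseteq> B" "YY @ c = c @ YY"
      "word_eval F YY = y1 \<or> word_eval F YY = inv\<^bsub>F\<^esub> y1"
    using comm_via_word[OF fb y1 cB uc(4) uc(2) uc(3)] by blast
  have "XX @ YY = YY @ XX" using comm_trans_monoid[OF uc(2) XX(2) YY(2)] .
  then have "word_eval F XX \<otimes>\<^bsub>F\<^esub> word_eval F YY = word_eval F YY \<otimes>\<^bsub>F\<^esub> word_eval F XX"
    using XX(1) YY(1) BF by (metis eval_append subset_trans)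
  then have "x1 \<otimes>\<^bsub>F\<^esub> y1 = y1 \<otimes>\<^bsub>F\<^esub> x1"
    using XX(3) YY(3) inv_comm_iff x1 y1
    by (metis inv_closed inv_inv)
  then show ?thesis using conj_comm_iff[OF x y g] unfolding x1_def y1_def by simp
qed




lemma hom_inv': "h \<in> hom G F \<Longrightarrow> group G \<Longrightarrow> group F \<Longrightarrow> x \<in> carrier G \<Longrightarrow> h (inv\<^bsub>G\<^esub> x) = inv\<^bsub>F\<^esub> (h x)"
  by (rule group_hom.hom_inv) (simp_all add: group_hom_def group_hom_axioms_def)

lemma kernels_normal:
  assumes G: "group G" and F: "group F" and H: "H \<subseteq> hom G F"
  shows "{g \<in> carrier G. \<forall>h\<in>H. h g = \<one>\<^bsub>F\<^esub>} \<lhd> G"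
proof -
  interpret group G by (rule G)
  interpret F: group F by (rule F)
  let ?K = "{g \<in> carrier G. \<forall>h\<in>H. h g = \<one>\<^bsub>F\<^esub>}"
  have sg: "subgroup ?K G"
  proof (rule subgroupI)
    show "?K \<noteq> {}" using H hom_one[OF _ G F] by auto
    show "inv\<^bsub>G\<^esub> a \<in> ?K" if "a \<in> ?K" for a
    proof -
      have "h (inv\<^bsub>G\<^esub> a) = \<one>\<^bsub>F\<^esub>" if "h \<in> H" for h
      proof -
        have hh: "h \<in> hom G F" using H that by auto
        have aG: "a \<in> carrier G" and ha: "h a = \<one>\<^bsub>F\<^esub>" using \<open>a \<in> ?K\<close> that by auto
        show ?thesis using hom_inv'[OF hh G F aG] ha F.inv_one by simp
      qed
      then show ?thesis using \<open>a \<in> ?K\<close> by auto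
    qed
    show "a \<otimes>\<^bsub>G\<^esub> b \<in> ?K" if "a \<in> ?K" "b \<in> ?K" for a b
      using that H hom_mult by fastforce
  qed auto
  have "x \<otimes>\<^bsub>G\<^esub> k \<otimes>\<^bsub>G\<^esub> inv\<^bsub>G\<^esub> x \<in> ?K" if "x \<in> carrier G" "k \<in> ?K" for x k
  proof -
    have "h (x \<otimes>\<^bsub>G\<^esub> k \<otimes>\<^bsub>G\<^esub> inv\<^bsub>G\<^esub> x) = \<one>\<^bsub>F\<^esub>" if "h \<in> H" for h
    proof -
      have hh: "h \<in> hom G F" using H that by auto
      have "h (x \<otimes>\<^bsub>G\<^esub> k \<otimes>\<^bsub>G\<^esub> inv\<^bsub>G\<^esub> x) = h x \<otimes>\<^bsub>F\<^esub> h k \<otimes>\<^bsub>F\<^esub> inv\<^bsub>F\<^esub> (h x)"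
        using hh \<open>x \<in> carrier G\<close> \<open>k \<in> ?K\<close> hom_inv'[OF hh G F] by (simp add: hom_mult)
      also have "\<dots> = \<one>\<^bsub>F\<^esub>"
      proof -
        have hk: "h k = \<one>\<^bsub>F\<^esub>" using that \<open>k \<in> ?K\<close> by blast
        show ?thesis using hk hom_in_carrier[OF hh \<open>x \<in> carrier G\<close>] by simp
      qed
      finally show ?thesis .
    qed
    then show ?thesis using that by auto
  qed
  then show ?thesis using sg group.normal_inv_iff[OF G] by blast
qed

lemma (in group) rcos_eq_iff:
  assumes "subgroup H G" "u \<in> carrier G" "v \<in> carrier G"
  shows "H #> u = H #> v \<longleftrightarrow> u \<otimes> inv v \<in> H"
proof
  assume "H #> u = H #> v"
  then have "u \<in> H #> v" using rcos_self assms by blast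
  then show "u \<otimes> inv v \<in> H" using subgroup.rcos_module_imp[OF assms(1) is_group assms(3)] by blast
next
  assume "u \<otimes> inv v \<in> H"
  then have "u \<in> H #> v" using subgroup.rcos_module_rev[OF assms(1) is_group assms(3) assms(2)] by blast
  then show "H #> u = H #> v" using repr_independence[OF _ assms(3) assms(1)] by simp
qed

lemma (in group) mult_inv_eq_one: "a \<in> carrier G \<Longrightarrow> b \<in> carrier G \<Longrightarrow> a \<otimes> inv b = \<one> \<longleftrightarrow> a = b"
  by (metis inv_closed inv_inv r_inv inv_comm inv_equality)




locale rfsetup =
  fixes G :: "('a, 'm) monoid_scheme" (structure) and F :: "('b, 'n) monoid_scheme" and B
  assumes G: "group G" and fb: "free_basis F B"
begin

lemma F: "group F" using fb by (simp add: free_basis_def)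

abbreviation "K \<equiv> RF_kernel G F"
abbreviation "N \<equiv> RFna_kernel G F"

lemma K_normal: "K \<lhd> G"
  unfolding RF_kernel_def using kernels_normal[OF G F, of "hom G F"] by simp

lemma N_eq: "N = {g \<in> carrier G. \<forall>h\<in>{h \<in> hom G F. nonabelian_set F (h ` carrier G)}. h g = \<one>\<^bsub>F\<^esub>}"
  unfolding RFna_kernel_def by auto

lemma N_normal: "N \<lhd> G"
  unfolding N_eq by (rule kernels_normal[OF G F]) auto

lemma K_sub_N: "K \<subseteq> N"
  unfolding RF_kernel_def RFna_kernel_def by auto

lemma K_diff: "u \<in> carrier G \<Longrightarrow> v \<in> carrier G \<Longrightarrow> u \<otimes>\<^bsub>G\<^esub> inv\<^bsub>G\<^esub> v \<in> K \<longleftrightarrow> (\<forall>h\<in>hom G F. h u = h v)"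
proof -
  assume u: "u \<in> carrier G" and v: "v \<in> carrier G"
  interpret group G by (rule G)
  interpret F: group F by (rule F)
  have "h (u \<otimes> inv v) = \<one>\<^bsub>F\<^esub> \<longleftrightarrow> h u = h v" if "h \<in> hom G F" for h
    using that u v hom_inv'[OF that G F] F.mult_inv_eq_one[OF hom_in_carrier[OF that u] hom_in_carrier[OF that v]]
    by (simp add: hom_mult)
  then show ?thesis unfolding RF_kernel_def using u v by auto
qed

lemma pointwise:
  assumes g: "g \<in> carrier G"
  shows "g \<in> N \<longleftrightarrow> (\<forall>a\<in>carrier G. \<forall>h\<in>hom G F. h a \<otimes>\<^bsub>F\<^esub> h g = h g \<otimes>\<^bsub>F\<^esub> h a)"
proof
  interpret F: group F by (rule F)
  assume gN: "g \<in> N"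
  show "\<forall>a\<in>carrier G. \<forall>h\<in>hom G F. h a \<otimes>\<^bsub>F\<^esub> h g = h g \<otimes>\<^bsub>F\<^esub> h a"
  proof (intro ballI)
    fix a h assume a: "a \<in> carrier G" and h: "h \<in> hom G F"
    show "h a \<otimes>\<^bsub>F\<^esub> h g = h g \<otimes>\<^bsub>F\<^esub> h a"
    proof (cases "nonabelian_set F (h ` carrier G)")
      case True
      then have "h g = \<one>\<^bsub>F\<^esub>" using gN h unfolding RFna_kernel_def by auto
      then show ?thesis using hom_in_carrier[OF h a] by simp
    next
      case False
      then show ?thesis using a g unfolding nonabelian_set_def by auto
    qed
  qed
next
  interpret F: group F by (rule F)
  assume H: "\<forall>a\<in>carrier G. \<forall>h\<in>hom G F. h a \<otimes>\<^bsub>F\<^esub> h g = h g \<otimes>\<^bsub>F\<^esub> h a"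
  have "h g = \<one>\<^bsub>F\<^esub>" if h: "h \<in> hom G F" and na: "nonabelian_set F (h ` carrier G)" for h
  proof (rule ccontr)
    assume ne: "h g \<noteq> \<one>\<^bsub>F\<^esub>"
    obtain a b where a: "a \<in> carrier G" and b: "b \<in> carrier G"
      and nc: "h a \<otimes>\<^bsub>F\<^esub> h b \<noteq> h b \<otimes>\<^bsub>F\<^esub> h a"
      using na unfolding nonabelian_set_def by auto
    have "h a \<otimes>\<^bsub>F\<^esub> h b = h b \<otimes>\<^bsub>F\<^esub> h a"
      by (rule free_comm_trans[OF fb hom_in_carrier[OF h a] hom_in_carrier[OF h b]
            hom_in_carrier[OF h g] ne]) (use H a b h in auto)
    then show False using nc by simp
  qed
  then show "g \<in> N" using g unfolding RFna_kernel_def by auto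
qed

lemma center_coset:
  assumes g: "g \<in> carrier G"
  shows "K #>\<^bsub>G\<^esub> g \<in> group_center (G Mod K) \<longleftrightarrow> g \<in> N"
proof -
  interpret group G by (rule G)
  interpret normal K G by (rule K_normal)
  have sgK: "subgroup K G" by (rule subgroup_axioms)
  have mem: "K #> g \<in> rcosets K" using g by (rule rcosetsI[OF subset])
  have "K #> g \<in> group_center (G Mod K) \<longleftrightarrow> (\<forall>x\<in>rcosets K. x <#> (K #> g) = (K #> g) <#> x)"
    unfolding group_center_def FactGroup_def using mem by simp
  also have "\<dots> \<longleftrightarrow> (\<forall>a\<in>carrier G. (K #> a) <#> (K #> g) = (K #> g) <#> (K #> a))"
    unfolding RCOSETS_def by blast
  also have "\<dots> \<longleftrightarrow> (\<forall>a\<in>carrier G. K #> (a \<otimes> g) = K #> (g \<otimes> a))"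
    using g rcos_sum by (intro ball_cong) auto
  also have "\<dots> \<longleftrightarrow> (\<forall>a\<in>carrier G. \<forall>h\<in>hom G F. h a \<otimes>\<^bsub>F\<^esub> h g = h g \<otimes>\<^bsub>F\<^esub> h a)"
  proof (intro ball_cong refl)
    fix a assume a: "a \<in> carrier G"
    have c1: "a \<otimes> g \<in> carrier G" and c2: "g \<otimes> a \<in> carrier G" using a g by auto
    have "K #> (a \<otimes> g) = K #> (g \<otimes> a) \<longleftrightarrow> (\<forall>h\<in>hom G F. h (a \<otimes> g) = h (g \<otimes> a))"
      using rcos_eq_iff[OF sgK c1 c2] K_diff[OF c1 c2] by simp
    also have "\<dots> \<longleftrightarrow> (\<forall>h\<in>hom G F. h a \<otimes>\<^bsub>F\<^esub> h g = h g \<otimes>\<^bsub>F\<^esub> h a)"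
    proof (intro ball_cong refl)
      fix h assume h: "h \<in> hom G F"
      show "h (a \<otimes> g) = h (g \<otimes> a) \<longleftrightarrow> h a \<otimes>\<^bsub>F\<^esub> h g = h g \<otimes>\<^bsub>F\<^esub> h a"
        using hom_mult[OF h a g] hom_mult[OF h g a] by simp
    qed
    finally show "K #> (a \<otimes> g) = K #> (g \<otimes> a) \<longleftrightarrow> (\<forall>h\<in>hom G F. h a \<otimes>\<^bsub>F\<^esub> h g = h g \<otimes>\<^bsub>F\<^esub> h a)" .
  qed
  also have "\<dots> \<longleftrightarrow> g \<in> N" using pointwise[OF g] by simp
  finally show ?thesis .
qed

lemma proj_coset:
  assumes g: "g \<in> carrier G"
  shows "RF_proj G F (K #>\<^bsub>G\<^esub> g) = N #>\<^bsub>G\<^esub> g"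
proof -
  interpret group G by (rule G)
  have sgK: "subgroup K G" using K_normal normal_imp_subgroup by blast
  have sgN: "subgroup N G" using N_normal normal_imp_subgroup by blast
  have eq: "N #> g' = N #> g" if "g' \<in> K #> g" for g'
  proof -
    have "g' \<in> N #> g" using that K_sub_N unfolding r_coset_def by blast
    then show ?thesis using repr_independence[OF _ g sgN] by simp
  qed
  have ne: "g \<in> K #> g" using rcos_self[OF g sgK] .
  have "RF_proj G F (K #> g) = (\<Union>g'\<in>K #> g. N #> g)"
    unfolding RF_proj_def using eq by (intro SUP_cong refl) 
  also have "\<dots> = N #> g" using ne by (auto simp: UN_constant)
  finally show ?thesis .
qed

end




context rfsetup
begin

lemma rcosets_obtain: "x \<in> rcosets\<^bsub>G\<^esub> H \<Longrightarrow> \<exists>a\<in>carrier G. x = H #>\<^bsub>G\<^esub> a"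
  by (auto simp: RCOSETS_def)

lemma carrier_RF: "carrier (RF G F) = rcosets\<^bsub>G\<^esub> K" by (simp add: RF_def FactGroup_def)
lemma carrier_RFna: "carrier (RFna G F) = rcosets\<^bsub>G\<^esub> N" by (simp add: RFna_def FactGroup_def)
lemma mult_RF: "x \<otimes>\<^bsub>RF G F\<^esub> y = x <#>\<^bsub>G\<^esub> y" by (simp add: RF_def FactGroup_def)
lemma mult_RFna: "x \<otimes>\<^bsub>RFna G F\<^esub> y = x <#>\<^bsub>G\<^esub> y" by (simp add: RFna_def FactGroup_def)
lemma one_RFna: "\<one>\<^bsub>RFna G F\<^esub> = N" by (simp add: RFna_def)

lemma part1: "RF_proj G F \<in> hom (RF G F) (RFna G F)"
proof (rule homI)
  interpret group G by (rule G)
  interpret nK: normal K G by (rule K_normal)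
  interpret nN: normal N G by (rule N_normal)
  fix x assume "x \<in> carrier (RF G F)"
  then obtain a where a: "a \<in> carrier G" "x = K #> a" using rcosets_obtain carrier_RF by blast
  show "RF_proj G F x \<in> carrier (RFna G F)"
    using a proj_coset carrier_RFna rcosetsI[OF nN.subset] by simp
next
  interpret group G by (rule G)
  interpret nK: normal K G by (rule K_normal)
  interpret nN: normal N G by (rule N_normal)
  fix x y assume "x \<in> carrier (RF G F)" "y \<in> carrier (RF G F)"
  then obtain a b where a: "a \<in> carrier G" "x = K #> a" and b: "b \<in> carrier G" "y = K #> b"
    using rcosets_obtain carrier_RF by metis
  show "RF_proj G F (x \<otimes>\<^bsub>RF G F\<^esub> y) = RF_proj G F x \<otimes>\<^bsub>RFna G F\<^esub> RF_proj G F y"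
    using a b by (simp add: mult_RF mult_RFna nK.rcos_sum nN.rcos_sum proj_coset)
qed

lemma part2: "RF_proj G F ` carrier (RF G F) = carrier (RFna G F)"
proof
  show "RF_proj G F ` carrier (RF G F) \<subseteq> carrier (RFna G F)"
    by (rule image_subsetI) (rule hom_in_carrier[OF part1])
next
  interpret group G by (rule G)
  interpret nK: normal K G by (rule K_normal)
  show "carrier (RFna G F) \<subseteq> RF_proj G F ` carrier (RF G F)"
  proof
    fix x assume "x \<in> carrier (RFna G F)"
    then obtain a where a: "a \<in> carrier G" "x = N #> a" using rcosets_obtain carrier_RFna by blast
    then have "x = RF_proj G F (K #> a)" using proj_coset[OF a(1)] by simp
    moreover have "K #> a \<in> carrier (RF G F)" using a carrier_RF rcosetsI[OF nK.subset] by simp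
    ultimately show "x \<in> RF_proj G F ` carrier (RF G F)" by blast
  qed
qed

lemma part3: "kernel (RF G F) (RFna G F) (RF_proj G F) = group_center (RF G F)"
proof -
  interpret group G by (rule G)
  interpret nK: normal K G by (rule K_normal)
  have sgN: "subgroup N G" using N_normal normal_imp_subgroup by blast
  have "x \<in> kernel (RF G F) (RFna G F) (RF_proj G F) \<longleftrightarrow> x \<in> group_center (RF G F)"
    if x: "x \<in> carrier (RF G F)" for x
  proof -
    obtain a where a: "a \<in> carrier G" "x = K #> a" using x rcosets_obtain carrier_RF by blast
    have "x \<in> kernel (RF G F) (RFna G F) (RF_proj G F) \<longleftrightarrow> N #> a = N"
      using x a proj_coset one_RFna unfolding kernel_def by simp
    also have "\<dots> \<longleftrightarrow> a \<in> N" using coset_join1[OF _ a(1) sgN] coset_join2[OF a(1) sgN] by blast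
    also have "\<dots> \<longleftrightarrow> x \<in> group_center (RF G F)" using center_coset[OF a(1)] a(2) by (simp add: RF_def)
    finally show ?thesis .
  qed
  moreover have "kernel (RF G F) (RFna G F) (RF_proj G F) \<subseteq> carrier (RF G F)"
    unfolding kernel_def by blast
  moreover have "group_center (RF G F) \<subseteq> carrier (RF G F)"
    unfolding group_center_def by blast
  ultimately show ?thesis by blast
qed

lemma part4: "residually_na_free G F \<longleftrightarrow> residually_free G F \<and> group_center G = {\<one>\<^bsub>G\<^esub>}"
proof -
  interpret group G by (rule G)
  interpret F: group F by (rule F)
  have sgK: "subgroup K G" using K_normal normal_imp_subgroup by blast
  have sgN: "subgroup N G" using N_normal normal_imp_subgroup by blast
  have oneK: "\<one> \<in> K" using sgK subgroup.one_closed by blast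
  have oneN: "\<one> \<in> N" using sgN subgroup.one_closed by blast
  have oneZ: "\<one> \<in> group_center G" unfolding group_center_def by simp
  have ZN: "z \<in> N" if z: "z \<in> group_center G" for z
  proof -
    have zc: "z \<in> carrier G" and zz: "\<forall>a\<in>carrier G. a \<otimes> z = z \<otimes> a" using z unfolding group_center_def by auto
    have "\<forall>a\<in>carrier G. \<forall>h\<in>hom G F. h a \<otimes>\<^bsub>F\<^esub> h z = h z \<otimes>\<^bsub>F\<^esub> h a"
    proof (intro ballI)
      fix a h assume a: "a \<in> carrier G" and h: "h \<in> hom G F"
      show "h a \<otimes>\<^bsub>F\<^esub> h z = h z \<otimes>\<^bsub>F\<^esub> h a"
        using hom_mult[OF h a zc, symmetric] hom_mult[OF h zc a, symmetric] zz a by simp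
    qed
    then show ?thesis using pointwise[OF zc] by blast
  qed
  have NZ: "z \<in> group_center G" if z: "z \<in> N" and K1: "K = {\<one>}" for z
  proof -
    have zc: "z \<in> carrier G" using z sgN subgroup.subset by blast
    have "a \<otimes> z = z \<otimes> a" if a: "a \<in> carrier G" for a
    proof -
      have c1: "a \<otimes> z \<in> carrier G" and c2: "z \<otimes> a \<in> carrier G" using a zc by auto
      have "\<forall>h\<in>hom G F. h (a \<otimes> z) = h (z \<otimes> a)"
      proof
        fix h assume h: "h \<in> hom G F"
        have "h a \<otimes>\<^bsub>F\<^esub> h z = h z \<otimes>\<^bsub>F\<^esub> h a" using pointwise[OF zc] z a h by blast
        then show "h (a \<otimes> z) = h (z \<otimes> a)" using hom_mult[OF h a zc] hom_mult[OF h zc a] by simp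
      qed
      then have "a \<otimes> z \<otimes> inv (z \<otimes> a) \<in> K" using K_diff[OF c1 c2] by blast
      then have "a \<otimes> z \<otimes> inv (z \<otimes> a) = \<one>" using K1 by blast
      then show ?thesis using mult_inv_eq_one[OF c1 c2] by simp
    qed
    then show ?thesis using zc unfolding group_center_def by blast
  qed
  show ?thesis
  proof
    assume N1: "residually_na_free G F"
    then have N1': "N = {\<one>}" by (simp add: residually_na_free_def)
    have "K = {\<one>}" using K_sub_N N1' oneK by blast
    moreover have "group_center G = {\<one>}" using ZN N1' oneZ by blast
    ultimately show "residually_free G F \<and> group_center G = {\<one>}" by (simp add: residually_free_def)
  next
    assume A: "residually_free G F \<and> group_center G = {\<one>}"
    then have K1: "K = {\<one>}" by (simp add: residually_free_def)
    have "N = {\<one>}" using NZ[OF _ K1] A oneN by blast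
    then show "residually_na_free G F" by (simp add: residually_na_free_def)
  qed
qed

end

theorem mainTheorem4:
  fixes G :: "('a, 'm) monoid_scheme" and F :: "('b, 'n) monoid_scheme"
  assumes "finitely_generated_group G"
    and "nonabelian_free_group F"
  shows "RF_proj G F \<in> hom (RF G F) (RFna G F)
      \<and> RF_proj G F ` carrier (RF G F) = carrier (RFna G F)
      \<and> kernel (RF G F) (RFna G F) (RF_proj G F) = group_center (RF G F)
      \<and> (residually_na_free G F \<longleftrightarrow>
           residually_free G F \<and> group_center G = {\<one>\<^bsub>G\<^esub>})"
proof -
  obtain B where fb: "free_basis F B" using assms(2) unfolding nonabelian_free_group_def by blast
  have G: "group G" using assms(1) unfolding finitely_generated_group_def by blast
  interpret rfsetup G F B by (rule rfsetup.intro[OF G fb])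
  show ?thesis using part1 part2 part3 part4 by blast
qed



end
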